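(* Let $p^*\in(0,1)$ be the threshold belief of the insurance problem (the unique $p^*$ such that not insuring is optimal for $p<p^*$, the insuree is indifferent between not insuring and insuring at a positive indemnity at $p^*$, and insuring at a positive indemnity $\hat I(p)$ is strictly optimal for $p>p^*$). For $p\in(0,1)$ and small $\varepsilon>0$ define $\mathrm{VoI}(\varepsilon)=\tfrac12 v(p+\varepsilon)+\tfrac12 v(p-\varepsilon)-v(p)$. Then: (1) if $p<p^*$, $\mathrm{VoI}(\varepsilon)=0$ for all sufficiently small $\varepsilon>0$; (2) if $p=p^*$, there is a constant $C^*>0$ with $\mathrm{VoI}(\varepsilon)\sim C^*\varepsilon$ as $\varepsilon\to0$; (3) if $p>p^*$, there is a constant $C(p)>0$ with $\mathrm{VoI}(\varepsilon)\sim C(p)\varepsilon^2$ as $\varepsilon\to0$.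
   Context: Insurance model with parameters $\alpha\in(0,1)$, $f>0$, $\varpi>0$, $R>0$: premium $P(I)=\alpha I+f$, utility $u(w)=1-e^{-Rw}$; for probability of loss $q\in[0,1]$, $U_0(q)=(1-q)(1-e^{-R\varpi})$ (no insurance) and $U(q,I)=1-qe^{-R(I-P(I))}-(1-q)e^{-R(\varpi-P(I))}$ (insurance with indemnity $I\ge0$). The value function is $v(q)=\max\{U_0(q),\sup_{I\ge0}U(q,I)\}$. Here $f(\varepsilon)\sim g(\varepsilon)$ means $f(\varepsilon)/g(\varepsilon)\to1$. *)

theory Defs
  imports "HOL-Analysis.Analysis" "HOL-Library.Landau_Symbols"
begin

text \<open>Insurance model. Parameters: alpha in (0,1), fee f > 0, wealth w (varpi) > 0,
  risk aversion R > 0. Utility u(x) = 1 - exp(-R x).\<close>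

definition premium :: "real \<Rightarrow> real \<Rightarrow> real \<Rightarrow> real" where
  "premium \<alpha> f I = \<alpha> * I + f"

definition U0 :: "real \<Rightarrow> real \<Rightarrow> real \<Rightarrow> real" where
  "U0 R w q = (1 - q) * (1 - exp (- R * w))"

definition Uins :: "real \<Rightarrow> real \<Rightarrow> real \<Rightarrow> real \<Rightarrow> real \<Rightarrow> real \<Rightarrow> real" where
  "Uins \<alpha> f R w q I = 1 - q * exp (- R * (I - premium \<alpha> f I))
                         - (1 - q) * exp (- R * (w - premium \<alpha> f I))"

definition vfun :: "real \<Rightarrow> real \<Rightarrow> real \<Rightarrow> real \<Rightarrow> real \<Rightarrow> real" where
  "vfun \<alpha> f R w q = max (U0 R w q) (SUP I\<in>{0..}. Uins \<alpha> f R w q I)"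

definition VoI :: "real \<Rightarrow> real \<Rightarrow> real \<Rightarrow> real \<Rightarrow> real \<Rightarrow> real \<Rightarrow> real" where
  "VoI \<alpha> f R w p \<epsilon> = vfun \<alpha> f R w (p + \<epsilon>) / 2 + vfun \<alpha> f R w (p - \<epsilon>) / 2 - vfun \<alpha> f R w p"

end

theory Submission
  imports Defs "HOL-Library.Landau_Symbols"
begin


lemma Uins_le1:
  assumes "0 \<le> q" "q \<le> 1"
  shows "Uins \<alpha> f R w q I \<le> 1"
  using assms unfolding Uins_def
  by (smt (verit) exp_gt_zero mult_nonneg_nonneg)

lemma bdd_Uins:
  assumes "0 \<le> q" "q \<le> 1"
  shows "bdd_above ((\<lambda>I. Uins \<alpha> f R w q I) ` {0..})"
  using Uins_le1[OF assms] by (auto intro!: bdd_aboveI)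

lemma Uins_le_vfun:
  assumes "0 \<le> q" "q \<le> 1" "I \<ge> 0"
  shows "Uins \<alpha> f R w q I \<le> vfun \<alpha> f R w q"
proof -
  have "Uins \<alpha> f R w q I \<le> (SUP I\<in>{0..}. Uins \<alpha> f R w q I)"
    using assms by (intro cSUP_upper bdd_Uins) auto
  thus ?thesis unfolding vfun_def by linarith
qed

lemma U0_le_vfun: "U0 R w q \<le> vfun \<alpha> f R w q"
  unfolding vfun_def by simp

lemma Uins_affine: "Uins \<alpha> f R w (t * x + (1 - t) * y) I
   = t * Uins \<alpha> f R w x I + (1 - t) * Uins \<alpha> f R w y I"
  unfolding Uins_def by (simp add: algebra_simps)

lemma U0_affine: "U0 R w (t * x + (1 - t) * y) = t * U0 R w x + (1 - t) * U0 R w y"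
  unfolding U0_def by (simp add: algebra_simps)

lemma vfun_convex:
  assumes "0 \<le> x" "x \<le> 1" "0 \<le> y" "y \<le> 1" "0 \<le> t" "t \<le> 1"
  shows "vfun \<alpha> f R w (t * x + (1 - t) * y) \<le> t * vfun \<alpha> f R w x + (1 - t) * vfun \<alpha> f R w y"
proof -
  let ?r = "t * vfun \<alpha> f R w x + (1 - t) * vfun \<alpha> f R w y"
  have "U0 R w (t * x + (1 - t) * y) \<le> ?r"
    unfolding U0_affine using assms U0_le_vfun[of R w x \<alpha> f] U0_le_vfun[of R w y \<alpha> f]
    by (intro add_mono mult_left_mono) auto
  moreover have "(SUP I\<in>{0..}. Uins \<alpha> f R w (t * x + (1 - t) * y) I) \<le> ?r"
  proof (rule cSUP_least)
    fix I :: real assume "I \<in> {0..}"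
    then show "Uins \<alpha> f R w (t * x + (1 - t) * y) I \<le> ?r"
      unfolding Uins_affine using assms Uins_le_vfun[of x I \<alpha> f R w] Uins_le_vfun[of y I \<alpha> f R w]
      by (intro add_mono mult_left_mono) auto
  qed auto
  ultimately show ?thesis unfolding vfun_def by simp
qed



lemma part2:
  fixes \<alpha> f w R pstar :: real
  assumes "0 < \<alpha>" "\<alpha> < 1" "f > 0" "w > 0" "R > 0"
    and "0 < pstar" "pstar < 1"
    and below: "\<forall>q\<in>{0..<pstar}. vfun \<alpha> f R w q = U0 R w q"
    and at: "vfun \<alpha> f R w pstar = U0 R w pstar \<and>
             (\<exists>I>0. Uins \<alpha> f R w pstar I = U0 R w pstar)"
  shows "\<exists>C>0. (\<lambda>\<epsilon>. VoI \<alpha> f R w pstar \<epsilon>) \<sim>[at_right 0] (\<lambda>\<epsilon>. C * \<epsilon>)"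
proof -
  obtain I0 where I0: "I0 > 0" "Uins \<alpha> f R w pstar I0 = U0 R w pstar" using at by auto
  define A where "A = exp (- R * (I0 - premium \<alpha> f I0))"
  define B where "B = exp (- R * (w - premium \<alpha> f I0))"
  define E where "E = exp (- R * w)"
  have pos: "0 < R * (\<alpha> * I0 + f)" using assms I0 by (intro mult_pos_pos add_pos_pos) auto
  have BE: "B > E" unfolding B_def E_def premium_def
    using pos by (simp add: algebra_simps)
  have aq: "Uins \<alpha> f R w q I0 - U0 R w q = q * (1 - A) + (1 - q) * (E - B)" for q
    unfolding Uins_def U0_def A_def B_def E_def by (simp add: algebra_simps)
  have rel: "pstar * (1 - A) + (1 - pstar) * (E - B) = 0" using aq[of pstar] I0 by simp
  define s where "s = (B - E) / pstar"
  have s_pos: "s > 0" unfolding s_def using BE assms by simp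
  have aq2: "Uins \<alpha> f R w q I0 - U0 R w q = s * (q - pstar)" for q
  proof -
    have e: "(1 - A) * pstar = (1 - pstar) * (B - E)" using rel by (simp add: algebra_simps)
    have "pstar * (q*(1-A) + (1-q)*(E-B)) = q*((1-A)*pstar) + pstar*(1-q)*(E-B)"
      by (simp add: algebra_simps)
    also have "\<dots> = q*((1-pstar)*(B-E)) + pstar*(1-q)*(E-B)" using e by simp
    also have "\<dots> = (B-E)*(q-pstar)" by (simp add: algebra_simps)
    finally have "pstar * (q*(1-A) + (1-q)*(E-B)) = (B-E)*(q-pstar)" .
    hence "q*(1-A) + (1-q)*(E-B) = (B-E)*(q-pstar) / pstar" using assms
      by (simp add: field_simps)
    thus ?thesis unfolding aq s_def by simp
  qed
  define h where "h \<epsilon> = vfun \<alpha> f R w (pstar + \<epsilon>) - U0 R w (pstar + \<epsilon>)" for \<epsilon>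
  have h0: "h 0 = 0" unfolding h_def using at by simp
  have hlow: "h \<epsilon> \<ge> s * \<epsilon>" if "0 < \<epsilon>" "\<epsilon> < 1 - pstar" for \<epsilon>
  proof -
    have "Uins \<alpha> f R w (pstar + \<epsilon>) I0 \<le> vfun \<alpha> f R w (pstar + \<epsilon>)"
      using that assms I0 by (intro Uins_le_vfun) auto
    thus ?thesis unfolding h_def using aq2[of "pstar + \<epsilon>"] by simp
  qed
  define Q where "Q \<epsilon> = h \<epsilon> / \<epsilon>" for \<epsilon>
  define J where "J = {0<..<1 - pstar}"
  have Qmono: "Q a \<le> Q b" if "a \<in> J" "b \<in> J" "0 < a" "a \<le> b" for a b
  proof -
    define t where "t = a / b"
    have t: "0 \<le> t" "t \<le> 1" unfolding t_def using that by auto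
    have eq: "t * (pstar + b) + (1 - t) * pstar = pstar + a" unfolding t_def using that
      by (simp add: field_simps)
    have "vfun \<alpha> f R w (t * (pstar + b) + (1 - t) * pstar)
       \<le> t * vfun \<alpha> f R w (pstar + b) + (1 - t) * vfun \<alpha> f R w pstar"
      using that t assms unfolding J_def by (intro vfun_convex) auto
    moreover have "U0 R w (t * (pstar + b) + (1 - t) * pstar) = t * U0 R w (pstar + b) + (1 - t) * U0 R w pstar"
      by (rule U0_affine)
    ultimately have "h a \<le> t * h b" unfolding h_def eq using at by (simp add: algebra_simps)
    hence "h a / a \<le> h b / b" unfolding t_def using that by (simp add: field_simps)
    thus ?thesis unfolding Q_def .
  qed
  have Qlow: "s \<le> Q a" if "a \<in> J" "0 < a" for a
    using hlow[of a] that unfolding Q_def J_def by (simp add: field_simps)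
  have lim0: "(Q \<longlongrightarrow> Inf (Q ` ({0<..} \<inter> J))) (at 0 within ({0<..} \<inter> J))"
    by (rule Lim_right_bound[where K = s]) (auto intro: Qmono Qlow)
  define L where "L = Inf (Q ` ({0<..} \<inter> J))"
  have atJ: "at (0::real) within ({0<..} \<inter> J) = at_right 0"
    by (rule at_within_nhd[where S = "{-(1-pstar)<..<1-pstar}"]) (use assms in \<open>auto simp: J_def\<close>)
  have lim: "(Q \<longlongrightarrow> L) (at_right 0)" using lim0 unfolding atJ L_def .
  have evJ: "eventually (\<lambda>\<epsilon>. \<epsilon> \<in> J \<and> 0 < \<epsilon> \<and> \<epsilon> < pstar) (at_right (0::real))"
    unfolding eventually_at_right_field J_def
    by (rule exI[of _ "min pstar (1 - pstar)"]) (use assms in auto)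
  have "s \<le> L"
    by (rule tendsto_lowerbound[OF lim]) (use evJ Qlow in \<open>auto elim!: eventually_mono\<close>)
  hence Lpos: "L > 0" using s_pos by simp
  have VoI_eq: "VoI \<alpha> f R w pstar \<epsilon> = h \<epsilon> / 2" if "0 < \<epsilon>" "\<epsilon> < pstar" for \<epsilon>
  proof -
    have "vfun \<alpha> f R w (pstar - \<epsilon>) = U0 R w (pstar - \<epsilon>)" using below that by auto
    thus ?thesis unfolding VoI_def h_def using at by (simp add: U0_def algebra_simps)
  qed
  have "((\<lambda>\<epsilon>. VoI \<alpha> f R w pstar \<epsilon> / (L / 2 * \<epsilon>)) \<longlongrightarrow> 1) (at_right 0)"
  proof -
    have "((\<lambda>\<epsilon>. Q \<epsilon> / L) \<longlongrightarrow> L / L) (at_right 0)"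
      using lim Lpos by (intro tendsto_divide) auto
    hence "((\<lambda>\<epsilon>. Q \<epsilon> / L) \<longlongrightarrow> 1) (at_right 0)" using Lpos by simp
    moreover have "eventually (\<lambda>\<epsilon>. Q \<epsilon> / L = VoI \<alpha> f R w pstar \<epsilon> / (L / 2 * \<epsilon>)) (at_right 0)"
      using evJ by (rule eventually_mono) (auto simp: VoI_eq Q_def)
    ultimately show ?thesis by (rule Lim_transform_eventually)
  qed
  hence "(\<lambda>\<epsilon>. VoI \<alpha> f R w pstar \<epsilon>) \<sim>[at_right 0] (\<lambda>\<epsilon>. L / 2 * \<epsilon>)" by (rule asymp_equivI')
  thus ?thesis using Lpos by (intro exI[of _ "L/2"]) auto
qed



lemma Uins_deriv:
  "DERIV (\<lambda>I. Uins \<alpha> f R w q I) I :>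
     q*R*(1-\<alpha>)*exp (- R * (I - premium \<alpha> f I)) - (1-q)*R*\<alpha>*exp (- R * (w - premium \<alpha> f I))"
  unfolding Uins_def premium_def
  by (rule derivative_eq_intros refl | simp add: algebra_simps)+

lemma vfun_closed:
  fixes \<alpha> f w R q I :: real
  assumes "0 < \<alpha>" "\<alpha> < 1" "R > 0" "0 < q" "q < 1" "I > 0"
    and eq: "Uins \<alpha> f R w q I = vfun \<alpha> f R w q"
    and mx: "\<forall>J\<ge>0. J \<noteq> I \<longrightarrow> Uins \<alpha> f R w q J < Uins \<alpha> f R w q I"
  shows "vfun \<alpha> f R w q = 1 - exp (R*f) / \<alpha> * ((1-\<alpha>)*exp (R*w)/\<alpha>) powr (\<alpha>-1)
            * (q powr \<alpha> * (1-q) powr (1-\<alpha>))"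
proof -
  define E1 where "E1 = exp (- R * (I - premium \<alpha> f I))"
  define E2 where "E2 = exp (- R * (w - premium \<alpha> f I))"
  define Y where "Y = (1-\<alpha>)*exp (R*w)/\<alpha>"
  have Ypos: "Y > 0" unfolding Y_def using assms by simp
  have "q*R*(1-\<alpha>)*E1 - (1-q)*R*\<alpha>*E2 = 0"
    unfolding E1_def E2_def
  proof (rule DERIV_local_max[OF Uins_deriv \<open>I > 0\<close>], intro allI impI)
    fix y assume "\<bar>I - y\<bar> < I"
    hence "y \<ge> 0" by auto
    thus "Uins \<alpha> f R w q y \<le> Uins \<alpha> f R w q I" using mx by (cases "y = I") (auto simp: less_imp_le)
  qed
  hence "R * (q*(1-\<alpha>)*E1 - (1-q)*\<alpha>*E2) = 0" by (simp add: algebra_simps)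
  hence crit: "q*(1-\<alpha>)*E1 = (1-q)*\<alpha>*E2" using assms by simp
  have E2E1: "E2 = E1 * exp (R*I - R*w)" unfolding E1_def E2_def premium_def
    by (simp add: exp_add[symmetric] algebra_simps)
  have E1pos: "E1 > 0" unfolding E1_def by simp
  have "q*(1-\<alpha>) = (1-q)*\<alpha>*exp (R*I - R*w)" using crit E1pos unfolding E2E1 by simp
  hence e1: "exp (R*I - R*w) = q*(1-\<alpha>)/((1-q)*\<alpha>)" using assms
    by (simp add: eq_divide_eq mult_ac)
  have "exp (R*I) = exp (R*I - R*w) * exp (R*w)" by (simp add: exp_add[symmetric])
  also have "\<dots> = q * Y / (1-q)" unfolding e1 Y_def by (simp add: mult_ac)
  finally have expRI: "exp (R*I) = q * Y / (1-q)" .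
  have "E1 = exp (R*f) * exp ((\<alpha>-1) * (R*I))" unfolding E1_def premium_def
    by (simp add: exp_add[symmetric] algebra_simps)
  also have "exp ((\<alpha>-1) * (R*I)) = exp (R*I) powr (\<alpha>-1)" by (simp add: powr_def)
  finally have E1eq: "E1 = exp (R*f) * (q * Y / (1-q)) powr (\<alpha>-1)" unfolding expRI .
  have "q * (q * Y / (1-q)) powr (\<alpha>-1) = Y powr (\<alpha>-1) * (q powr \<alpha> * (1-q) powr (1-\<alpha>))"
  proof -
    define a where "a = q powr (\<alpha>-1)"
    define b where "b = Y powr (\<alpha>-1)"
    define c where "c = (1-q) powr (\<alpha>-1)"
    have 1: "(q * Y / (1-q)) powr (\<alpha>-1) = a * b / c"
      unfolding a_def b_def c_def using assms Ypos by (simp add: powr_divide powr_mult)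
    have 2: "q * a = q powr \<alpha>"
    proof -
      have "q powr \<alpha> = q powr (1 + (\<alpha>-1))" by simp
      also have "\<dots> = q powr 1 * q powr (\<alpha>-1)" by (rule powr_add)
      finally show "q * a = q powr \<alpha>" using assms a_def by simp
    qed
    have 3: "1 / c = (1-q) powr (1-\<alpha>)"
    proof -
      have "(1-q) powr (1-\<alpha>) = (1-q) powr (-(\<alpha>-1))" by simp
      also have "\<dots> = 1 / (1-q) powr (\<alpha>-1)" by (rule powr_minus_divide)
      finally show "1 / c = (1-q) powr (1-\<alpha>)" using c_def by simp
    qed
    have "q * (a * b / c) = b * ((q * a) * (1 / c))" by simp
    thus ?thesis unfolding 1 2 3 b_def .
  qed
  note key = this
  have "Uins \<alpha> f R w q I = 1 - q*E1 - (1-q)*E2" unfolding Uins_def E1_def E2_def ..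
  also have "(1-q)*E2 = q*(1-\<alpha>)*E1/\<alpha>" using crit assms by (simp add: eq_divide_eq mult_ac)
  also have "1 - q*E1 - q*(1-\<alpha>)*E1/\<alpha> = 1 - q*E1/\<alpha>" 
  proof -
    have "q*E1 + q*(1-\<alpha>)*E1/\<alpha> = q*E1/\<alpha>" using assms by (simp add: field_simps)
    thus ?thesis by linarith
  qed
  also have "q*E1/\<alpha> = exp (R*f) / \<alpha> * (Y powr (\<alpha>-1) * (q powr \<alpha> * (1-q) powr (1-\<alpha>)))"
    unfolding E1eq key[symmetric] by simp
  finally show ?thesis using eq unfolding Y_def by (simp add: mult.assoc)
qed


definition G :: "real \<Rightarrow> real \<Rightarrow> real" where
  "G a q = q powr a * (1-q) powr (1-a)"
definition G1 :: "real \<Rightarrow> real \<Rightarrow> real" where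
  "G1 a q = a * q powr (a-1) * (1-q) powr (1-a) - (1-a) * q powr a * (1-q) powr (-a)"
definition G2 :: "real \<Rightarrow> real \<Rightarrow> real" where
  "G2 a q = a*(a-1) * q powr (a-2) * (1-q) powr (1-a) - 2*a*(1-a) * q powr (a-1) * (1-q) powr (-a)
           - (1-a)*a * q powr a * (1-q) powr (-a-1)"

lemma term_deriv:
  fixes q b c :: real
  assumes "0 < q" "q < 1"
  shows "DERIV (\<lambda>q. q powr b * (1-q) powr c) q :>
    b * q powr (b-1) * (1-q) powr c - c * q powr b * (1-q) powr (c-1)"
proof -
  have d1: "DERIV (\<lambda>q. q powr b) q :> b * q powr (b-1)"
    using has_real_derivative_powr[of q b] assms by simp
  have "DERIV (\<lambda>q. 1 - q) q :> -1" by (rule derivative_eq_intros refl | simp)+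
  from DERIV_fun_powr[OF this, of c] assms
  have d2: "DERIV (\<lambda>q. (1-q) powr c) q :> c * (1-q) powr (c-1) * (-1)" by simp
  from DERIV_mult[OF d1 d2] show ?thesis
    by (rule DERIV_cong) (simp add: algebra_simps)
qed

lemma G_deriv: fixes q :: real assumes "0 < q" "q < 1" shows "DERIV (G a) q :> G1 a q"
  unfolding G_def[abs_def] G1_def
  using term_deriv[OF assms, of a "1-a"] by (simp add: algebra_simps)

lemma G1_deriv: fixes q :: real assumes "0 < q" "q < 1" shows "DERIV (G1 a) q :> G2 a q"
proof -
  have "DERIV (\<lambda>q. a * (q powr (a-1) * (1-q) powr (1-a)) - (1-a) * (q powr a * (1-q) powr (-a))) q :>
     a * ((a-1) * q powr (a-1-1) * (1-q) powr (1-a) - (1-a) * q powr (a-1) * (1-q) powr (1-a-1))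
     - (1-a) * (a * q powr (a-1) * (1-q) powr (-a) - (-a) * q powr a * (1-q) powr (-a-1))"
    by (intro DERIV_diff DERIV_cmult term_deriv assms)
  moreover have "G1 a = (\<lambda>q. a * (q powr (a-1) * (1-q) powr (1-a)) - (1-a) * (q powr a * (1-q) powr (-a)))"
    unfolding G1_def by (simp add: fun_eq_iff mult.assoc)
  moreover have e1: "a-1-1 = a-2" "1-a-1 = -a" by simp_all
  ultimately show ?thesis unfolding G2_def e1
    by (rule_tac DERIV_cong) (auto simp: algebra_simps)

qed



lemma G2_neg:
  assumes "0 < a" "a < 1" "0 < q" "q < 1"
  shows "G2 a q < 0"
proof -
  have "a*(a-1) * q powr (a-2) * (1-q) powr (1-a) < 0"
  proof -
    have "a*(a-1) < 0" using assms by (simp add: mult_pos_neg)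
    moreover have "q powr (a-2) > 0" "(1-q) powr (1-a) > 0" using assms by simp_all
    ultimately show ?thesis by (simp add: mult_neg_pos)
  qed
  moreover have "2*a*(1-a) * q powr (a-1) * (1-q) powr (-a) > 0" using assms by simp
  moreover have "(1-a)*a * q powr a * (1-q) powr (-a-1) > 0" using assms by simp
  ultimately show ?thesis unfolding G2_def by linarith
qed

lemma part3:
  fixes \<alpha> f w R pstar p :: real
  assumes "0 < \<alpha>" "\<alpha> < 1" "f > 0" "w > 0" "R > 0"
    and "0 < pstar" "pstar < p" "p < 1"
    and above: "\<forall>q\<in>{pstar<..<1}. \<exists>I>0. Uins \<alpha> f R w q I = vfun \<alpha> f R w q
                  \<and> U0 R w q < Uins \<alpha> f R w q I
                  \<and> (\<forall>J\<ge>0. J \<noteq> I \<longrightarrow> Uins \<alpha> f R w q J < Uins \<alpha> f R w q I)"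
  shows "\<exists>C>0. (\<lambda>\<epsilon>. VoI \<alpha> f R w p \<epsilon>) \<sim>[at_right 0] (\<lambda>\<epsilon>. C * \<epsilon>^2)"
proof -
  define M where "M = exp (R*f) / \<alpha> * ((1-\<alpha>)*exp (R*w)/\<alpha>) powr (\<alpha>-1)"
  have Mpos: "M > 0" unfolding M_def using assms by simp
  have vf: "vfun \<alpha> f R w q = 1 - M * G \<alpha> q" if "pstar < q" "q < 1" for q
  proof -
    have "q \<in> {pstar<..<1}" using that by simp
    then obtain I where I: "I > 0" "Uins \<alpha> f R w q I = vfun \<alpha> f R w q"
        "\<forall>J\<ge>0. J \<noteq> I \<longrightarrow> Uins \<alpha> f R w q J < Uins \<alpha> f R w q I"
      using above by blast
    show ?thesis using vfun_closed[OF assms(1,2,5) _ that(2) I] that assms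
      unfolding M_def G_def by (simp add: mult.assoc)
  qed
  define d where "d = min (p - pstar) (1 - p)"
  have dpos: "d > 0" unfolding d_def using assms by simp
  define N where "N \<epsilon> = G \<alpha> (p+\<epsilon>) + G \<alpha> (p-\<epsilon>) - 2 * G \<alpha> p" for \<epsilon>
  define \<Phi> where "\<Phi> \<epsilon> = G1 \<alpha> (p+\<epsilon>) - G1 \<alpha> (p-\<epsilon>)" for \<epsilon>
  have inr: "0 < p + \<epsilon>" "p + \<epsilon> < 1" "0 < p - \<epsilon>" "p - \<epsilon> < 1" if "\<bar>\<epsilon>\<bar> < d" for \<epsilon>
    using that assms unfolding d_def by auto
  have i1: "((\<lambda>\<epsilon>. p + \<epsilon>) has_real_derivative 1) (at x)" for x
    by (auto intro!: derivative_eq_intros)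
  have i2: "((\<lambda>\<epsilon>. p - \<epsilon>) has_real_derivative -1) (at x)" for x
    by (auto intro!: derivative_eq_intros)
  have dN: "DERIV N \<epsilon> :> \<Phi> \<epsilon>" if "\<bar>\<epsilon>\<bar> < d" for \<epsilon>
  proof -
    have a: "DERIV (\<lambda>\<epsilon>. G \<alpha> (p+\<epsilon>)) \<epsilon> :> G1 \<alpha> (p+\<epsilon>) * 1"
      by (rule DERIV_chain2[OF G_deriv[OF inr(1,2)[OF that]] i1])
    have b: "DERIV (\<lambda>\<epsilon>. G \<alpha> (p-\<epsilon>)) \<epsilon> :> G1 \<alpha> (p-\<epsilon>) * (-1)"
      by (rule DERIV_chain2[OF G_deriv[OF inr(3,4)[OF that]] i2])
    have "DERIV N \<epsilon> :> G1 \<alpha> (p+\<epsilon>) * 1 + G1 \<alpha> (p-\<epsilon>) * (-1) - 0"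
      unfolding N_def[abs_def] by (intro DERIV_diff DERIV_add a b DERIV_const)
    thus ?thesis unfolding \<Phi>_def by simp
  qed
  have dPhi: "DERIV \<Phi> 0 :> G2 \<alpha> p + G2 \<alpha> p"
  proof -
    have a: "DERIV (\<lambda>\<epsilon>. G1 \<alpha> (p+\<epsilon>)) 0 :> G2 \<alpha> (p+0) * 1"
      using dpos by (intro DERIV_chain2[OF G1_deriv i1] inr[of 0]) auto
    have b: "DERIV (\<lambda>\<epsilon>. G1 \<alpha> (p-\<epsilon>)) 0 :> G2 \<alpha> (p-0) * (-1)"
      using dpos by (intro DERIV_chain2[OF G1_deriv i2] inr[of 0]) auto
    have "DERIV \<Phi> 0 :> G2 \<alpha> (p+0) * 1 - G2 \<alpha> (p-0) * (-1)"
      unfolding \<Phi>_def[abs_def] by (intro DERIV_diff a b)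
    thus ?thesis by simp
  qed
  have N0: "N 0 = 0" unfolding N_def by simp
  have Phi0: "\<Phi> 0 = 0" unfolding \<Phi>_def by simp
  have ev: "eventually (\<lambda>\<epsilon>. 0 < \<epsilon> \<and> \<epsilon> < d) (at_right (0::real))"
    unfolding eventually_at_right_field by (rule exI[of _ d]) (use dpos in auto)
  have limN: "(N \<longlongrightarrow> 0) (at_right 0)"
  proof -
    have "isCont N 0" using dN[of 0] dpos by (intro DERIV_isCont) auto
    hence "(N \<longlongrightarrow> 0) (at 0)" using N0 by (simp add: isCont_def)
    thus ?thesis by (rule tendsto_mono[OF at_le, rotated]) simp
  qed
  have limPhi: "((\<lambda>\<epsilon>. \<Phi> \<epsilon> / (2 * \<epsilon>)) \<longlongrightarrow> G2 \<alpha> p) (at_right 0)"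
  proof -
    have "((\<lambda>h. (\<Phi> (0 + h) - \<Phi> 0) / h) \<longlongrightarrow> G2 \<alpha> p + G2 \<alpha> p) (at 0)"
      by (rule DERIV_D[OF dPhi])
    hence "((\<lambda>h. \<Phi> h / h / 2) \<longlongrightarrow> (G2 \<alpha> p + G2 \<alpha> p) / 2) (at 0)"
      unfolding Phi0 by (intro tendsto_divide tendsto_const) auto
    hence "((\<lambda>h. \<Phi> h / (2 * h)) \<longlongrightarrow> G2 \<alpha> p) (at 0)" by (simp add: field_simps)
    thus ?thesis by (rule tendsto_mono[OF at_le, rotated]) simp
  qed
  have limQ: "((\<lambda>\<epsilon>. N \<epsilon> / \<epsilon>^2) \<longlongrightarrow> G2 \<alpha> p) (at_right 0)"
  proof (rule lhopital_right_0[OF limN _ _ _ _ _ limPhi])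
    show "((\<lambda>\<epsilon>::real. \<epsilon>^2) \<longlongrightarrow> 0) (at_right 0)"
      by (rule tendsto_mono[OF at_le, rotated]) (auto intro!: tendsto_eq_intros)
    show "eventually (\<lambda>\<epsilon>::real. \<epsilon>^2 \<noteq> 0) (at_right 0)" using ev by (rule eventually_mono) auto
    show "eventually (\<lambda>\<epsilon>::real. 2 * \<epsilon> \<noteq> 0) (at_right 0)" using ev by (rule eventually_mono) auto
    show "eventually (\<lambda>\<epsilon>. DERIV N \<epsilon> :> \<Phi> \<epsilon>) (at_right 0)" using ev by (rule eventually_mono) (auto intro!: dN)
    show "eventually (\<lambda>\<epsilon>. DERIV (\<lambda>\<epsilon>. \<epsilon>^2) \<epsilon> :> 2 * \<epsilon>) (at_right 0)"
      by (intro always_eventually allI) (rule derivative_eq_intros refl | simp)+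
  qed
  have G2n: "G2 \<alpha> p < 0" using G2_neg assms by simp
  define C where "C = - M * G2 \<alpha> p / 2"
  have Cpos: "C > 0" unfolding C_def using Mpos G2n by (simp add: mult_pos_neg)
  have VoI_eq: "VoI \<alpha> f R w p \<epsilon> = - M / 2 * N \<epsilon>" if "0 < \<epsilon>" "\<epsilon> < d" for \<epsilon>
  proof -
    have "vfun \<alpha> f R w (p+\<epsilon>) = 1 - M * G \<alpha> (p+\<epsilon>)" "vfun \<alpha> f R w (p-\<epsilon>) = 1 - M * G \<alpha> (p-\<epsilon>)"
         "vfun \<alpha> f R w p = 1 - M * G \<alpha> p"
      using that assms by (auto intro!: vf simp: d_def)
    thus ?thesis unfolding VoI_def N_def by (simp add: algebra_simps)
  qed
  have "((\<lambda>\<epsilon>. VoI \<alpha> f R w p \<epsilon> / (C * \<epsilon>^2)) \<longlongrightarrow> 1) (at_right 0)"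
  proof -
    have "((\<lambda>\<epsilon>. (N \<epsilon> / \<epsilon>^2) / G2 \<alpha> p) \<longlongrightarrow> G2 \<alpha> p / G2 \<alpha> p) (at_right 0)"
      using limQ G2n by (intro tendsto_divide) auto
    hence "((\<lambda>\<epsilon>. (N \<epsilon> / \<epsilon>^2) / G2 \<alpha> p) \<longlongrightarrow> 1) (at_right 0)" using G2n by simp
    moreover have "eventually (\<lambda>\<epsilon>. (N \<epsilon> / \<epsilon>^2) / G2 \<alpha> p = VoI \<alpha> f R w p \<epsilon> / (C * \<epsilon>^2)) (at_right 0)"
      using ev by (rule eventually_mono) (use Mpos G2n in \<open>auto simp: VoI_eq C_def\<close>)
    ultimately show ?thesis by (rule Lim_transform_eventually)
  qed
  hence "(\<lambda>\<epsilon>. VoI \<alpha> f R w p \<epsilon>) \<sim>[at_right 0] (\<lambda>\<epsilon>. C * \<epsilon>^2)" by (rule asymp_equivI')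
  thus ?thesis using Cpos by blast
qed

theorem proposition4p2:
  fixes \<alpha> f w R pstar :: real
  assumes "0 < \<alpha>" "\<alpha> < 1" "f > 0" "w > 0" "R > 0"
    and "0 < pstar" "pstar < 1"
    and below: "\<forall>q\<in>{0..<pstar}. vfun \<alpha> f R w q = U0 R w q"
    and at: "vfun \<alpha> f R w pstar = U0 R w pstar \<and>
             (\<exists>I>0. Uins \<alpha> f R w pstar I = U0 R w pstar)"
    and above: "\<forall>q\<in>{pstar<..<1}. \<exists>I>0. Uins \<alpha> f R w q I = vfun \<alpha> f R w q
                  \<and> U0 R w q < Uins \<alpha> f R w q I
                  \<and> (\<forall>J\<ge>0. J \<noteq> I \<longrightarrow> Uins \<alpha> f R w q J < Uins \<alpha> f R w q I)"
  shows "(\<forall>p\<in>{0<..<pstar}. eventually (\<lambda>\<epsilon>. VoI \<alpha> f R w p \<epsilon> = 0) (at_right 0))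
       \<and> (\<exists>C>0. (\<lambda>\<epsilon>. VoI \<alpha> f R w pstar \<epsilon>) \<sim>[at_right 0] (\<lambda>\<epsilon>. C * \<epsilon>))
       \<and> (\<forall>p\<in>{pstar<..<1}. \<exists>C>0. (\<lambda>\<epsilon>. VoI \<alpha> f R w p \<epsilon>) \<sim>[at_right 0] (\<lambda>\<epsilon>. C * \<epsilon>^2))"
  proof (intro conjI)
  show "\<forall>p\<in>{0<..<pstar}. eventually (\<lambda>\<epsilon>. VoI \<alpha> f R w p \<epsilon> = 0) (at_right 0)"
  proof
    fix p assume p: "p \<in> {0<..<pstar}"
    show "eventually (\<lambda>\<epsilon>. VoI \<alpha> f R w p \<epsilon> = 0) (at_right 0)"
      unfolding eventually_at_right_field
    proof (rule exI[of _ "min p (pstar - p)"], intro conjI allI impI)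
      show "0 < min p (pstar - p)" using p by auto
      fix \<epsilon> :: real assume e: "0 < \<epsilon>" "\<epsilon> < min p (pstar - p)"
      have "vfun \<alpha> f R w (p+\<epsilon>) = U0 R w (p+\<epsilon>)" "vfun \<alpha> f R w (p-\<epsilon>) = U0 R w (p-\<epsilon>)"
           "vfun \<alpha> f R w p = U0 R w p"
        using below p e by auto
      thus "VoI \<alpha> f R w p \<epsilon> = 0" unfolding VoI_def by (simp add: U0_def algebra_simps)
    qed
  qed
  show "\<exists>C>0. (\<lambda>\<epsilon>. VoI \<alpha> f R w pstar \<epsilon>) \<sim>[at_right 0] (\<lambda>\<epsilon>. C * \<epsilon>)"
    by (rule part2) (use assms in auto)
  show "\<forall>p\<in>{pstar<..<1}. \<exists>C>0. (\<lambda>\<epsilon>. VoI \<alpha> f R w p \<epsilon>) \<sim>[at_right 0] (\<lambda>\<epsilon>. C * \<epsilon>^2)"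
  proof
    fix p assume "p \<in> {pstar<..<1}"
    thus "\<exists>C>0. (\<lambda>\<epsilon>. VoI \<alpha> f R w p \<epsilon>) \<sim>[at_right 0] (\<lambda>\<epsilon>. C * \<epsilon>^2)"
      by (intro part3[where pstar = pstar]) (use assms in auto)
  qed
qed

end
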